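(* Let $\Phi$ be a real-valued function defined on $\mathbb{R}^2\times I_{2\pi}^2$ and let $r>0$. Suppose $\Phi$ can be uniformly analytically extended to $\mathbb{W}(r)^2$ with respect to $\boldsymbol\theta$, that for every $\boldsymbol\vartheta\in I_{2\pi}^2$ with $\zeta(\boldsymbol\vartheta)\ne0$ the function $\Phi(\cdot,\boldsymbol\vartheta)$ is $2\pi$-biperiodic, and that there exists $M>0$ such that for all $0<\delta<r$, $$\int_{I_{2\pi}^2}S_{\delta,\Phi}(\boldsymbol\vartheta)\,d\boldsymbol\vartheta\le M.$$ Then for all $0<\delta<r$ and all $\mathbf{k},\mathbf{l}\in\mathbb{Z}^2$, $|\hat\Phi_{\mathbf{k},\mathbf{l}}|\le\frac{M}{2\pi}e^{-\delta\|\mathbf{k}\|_1}$.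
   Context: $I_{2\pi}=[0,2\pi)$. For $\boldsymbol\theta=[\theta_0,\theta_1]\in I_{2\pi}^2$, $\zeta(\boldsymbol\theta)=\sqrt{(\min\{\theta_0,2\pi-\theta_0\})^2+(\min\{\theta_1,2\pi-\theta_1\})^2}$. For $r>0$, $\mathbb{W}(r)=\{z\in\mathbb{C}:|\mathrm{Im}\,z|<r\}$. A function $\Phi$ on $\mathbb{R}^2\times I_{2\pi}^2$ can be uniformly analytically extended to $\mathbb{W}(r)^2$ with respect to $\boldsymbol\theta$ if there is a function (still denoted $\Phi$) on $\mathbb{W}(r)^2\times I_{2\pi}^2$ such that for every $\boldsymbol\vartheta\in I_{2\pi}^2$ with $\zeta(\boldsymbol\vartheta)\ne0$, $\Phi(\cdot,\boldsymbol\vartheta)$ is holomorphic on $\mathbb{W}(r)^2$ and coincides with the original $\Phi(\cdot,\boldsymbol\vartheta)$ on $\mathbb{R}^2$. For $0<\delta<r$ and such $\boldsymbol\vartheta$, $S_{\delta,\Phi}(\boldsymbol\vartheta)=2\pi\sup\{|\Phi(\mathbf{z},\boldsymbol\vartheta)|:\mathbf{z}=[z_0,z_1]\in\mathbb{C}^2,\ |\mathrm{Im}\,z_0|=|\mathrm{Im}\,z_1|=\delta\}$. For $\mathbf{k}=[k_0,k_1]\in\mathbb{Z}^2$, $e_{\mathbf{k}}(\boldsymbol\theta)=\frac{1}{2\pi}e^{i(k_0\theta_0+k_1\theta_1)}$, $\|\mathbf{k}\|_1=|k_0|+|k_1|$, and for $\mathbf{k},\mathbf{l}\in\mathbb{Z}^2$,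 $\hat\Phi_{\mathbf{k},\mathbf{l}}=\int_{I_{2\pi}^2}\int_{I_{2\pi}^2}\Phi(\boldsymbol\theta,\boldsymbol\eta)e_{-\mathbf{k}}(\boldsymbol\theta)e_{-\mathbf{l}}(\boldsymbol\eta)\,d\boldsymbol\theta\,d\boldsymbol\eta$. *)

theory Defs
  imports "HOL-Analysis.Analysis"
begin

definition I2pi :: "real set" where
  "I2pi = {0..<2*pi}"

definition zeta :: "real \<times> real \<Rightarrow> real" where
  "zeta \<theta> = sqrt ((min (fst \<theta>) (2*pi - fst \<theta>))^2 + (min (snd \<theta>) (2*pi - snd \<theta>))^2)"

definition strip :: "real \<Rightarrow> complex set" where
  "strip r = {z. \<bar>Im z\<bar> < r}"

definition holomorphic2_on :: "(complex \<times> complex \<Rightarrow> complex) \<Rightarrow> (complex \<times> complex) set \<Rightarrow> bool" where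
  "holomorphic2_on f S \<longleftrightarrow> (\<forall>z\<in>S. \<exists>a b. (f has_derivative (\<lambda>h. a * fst h + b * snd h)) (at z within S))"

definition unif_analytic_ext ::
  "(real \<times> real \<Rightarrow> real \<times> real \<Rightarrow> real) \<Rightarrow> (complex \<times> complex \<Rightarrow> real \<times> real \<Rightarrow> complex) \<Rightarrow> real \<Rightarrow> bool" where
  "unif_analytic_ext Phi Phie r \<longleftrightarrow>
     (\<forall>\<tau> \<in> I2pi \<times> I2pi. zeta \<tau> \<noteq> 0 \<longrightarrow>
        holomorphic2_on (\<lambda>z. Phie z \<tau>) (strip r \<times> strip r) \<and>
        (\<forall>x0 x1. Phie (complex_of_real x0, complex_of_real x1) \<tau> = complex_of_real (Phi (x0, x1) \<tau>)))"

definition S_delta ::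
  "real \<Rightarrow> (complex \<times> complex \<Rightarrow> real \<times> real \<Rightarrow> complex) \<Rightarrow> real \<times> real \<Rightarrow> ennreal" where
  "S_delta \<delta> Phie \<tau> = ennreal (2*pi) *
     (SUP z \<in> {z :: complex \<times> complex. \<bar>Im (fst z)\<bar> = \<delta> \<and> \<bar>Im (snd z)\<bar> = \<delta>}. ennreal (cmod (Phie z \<tau>)))"

definition ebasis :: "int \<times> int \<Rightarrow> real \<times> real \<Rightarrow> complex" where
  "ebasis k \<theta> = (1 / (2 * pi)) * exp (\<i> * (of_int (fst k) * fst \<theta> + of_int (snd k) * snd \<theta>))"

definition norm1 :: "int \<times> int \<Rightarrow> int" where
  "norm1 k = \<bar>fst k\<bar> + \<bar>snd k\<bar>"

definition fourier2 :: "(real \<times> real \<Rightarrow> real \<times> real \<Rightarrow> real) \<Rightarrow> int \<times> int \<Rightarrow> int \<times> int \<Rightarrow> complex" where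
  "fourier2 Phi k l =
     (LINT \<eta>:(I2pi \<times> I2pi)|lborel. (LINT \<theta>:(I2pi \<times> I2pi)|lborel.
        complex_of_real (Phi \<theta> \<eta>) * ebasis (- k) \<theta> * ebasis (- l) \<eta>))"

end

theory Submission
  imports Defs "HOL-Complex_Analysis.Complex_Analysis"
begin

lemma strip_eq: "strip r = {z. Im z < r} \<inter> {z. Im z > -r}"
  by (auto simp: strip_def)

lemma open_strip: "open (strip r)"
  unfolding strip_eq by (intro open_Int open_halfspace_Im_lt open_halfspace_Im_gt)

lemma convex_strip: "convex (strip r)"
  unfolding strip_eq by (intro convex_Int convex_halfspace_Im_lt convex_halfspace_Im_gt)

lemma strip_add_real [simp]: "z + of_real x \<in> strip r \<longleftrightarrow> z \<in> strip r"
  by (simp add: strip_def)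

lemma real_in_strip: "r > 0 \<Longrightarrow> of_real x \<in> strip r"
  by (simp add: strip_def)

lemma identity_strip:
  fixes g :: "complex \<Rightarrow> complex"
  assumes "r > 0" "g holomorphic_on strip r" "\<And>x. g (of_real x) = 0" "z \<in> strip r"
  shows "g z = 0"
proof (rule analytic_continuation[OF assms(2) open_strip convex_connected[OF convex_strip]])
  show "\<real> \<subseteq> strip r" using assms(1) by (auto simp: strip_def elim!: Reals_cases)
  show "0 \<in> strip r" using assms(1) by (simp add: strip_def)
  show "(0::complex) islimpt \<real>"
  proof (rule islimptI)
    fix T :: "complex set" assume "0 \<in> T" "open T"
    then obtain e where e: "e > 0" "ball 0 e \<subseteq> T" by (meson openE)
    have "complex_of_real (e/2) \<in> T" using e by (auto simp: dist_norm)
    moreover have "complex_of_real (e/2) \<noteq> 0" using e by simp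
    ultimately show "\<exists>y\<in>\<real>. y \<in> T \<and> y \<noteq> 0" using Reals_of_real by blast
  qed
  show "\<And>z. z \<in> \<real> \<Longrightarrow> g z = 0" using assms(3) by (auto elim!: Reals_cases)
  show "z \<in> strip r" by fact
qed

lemma shift1:
  fixes h :: "complex \<Rightarrow> complex"
  assumes hol: "h holomorphic_on strip r" and per: "\<And>z. z \<in> strip r \<Longrightarrow> h (z + 2*pi) = h z"
    and c: "\<bar>c\<bar> < r"
  shows "integral {0..2*pi} (\<lambda>x. h (of_real x)) = integral {0..2*pi} (\<lambda>x. h (of_real x + \<i> * of_real c))"
proof -
  obtain H where H: "\<And>x. x \<in> strip r \<Longrightarrow> (H has_field_derivative h x) (at x within strip r)"
    using holomorphic_convex_primitive'[OF convex_strip open_strip hol] by metis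
  have H': "(H has_field_derivative h x) (at x)" if "x \<in> strip r" for x
    using H[OF that] at_within_open[OF that open_strip] by simp
  define D where "D a = H (a + of_real (2*pi)) - H a" for a :: complex
  have "\<exists>C. \<forall>a\<in>strip r. D a = C"
  proof (rule has_field_derivative_zero_constant[OF convex_strip])
    fix a assume a: "a \<in> strip r"
    have a2: "a + of_real (2*pi) \<in> strip r" using a strip_add_real[of a "2*pi" r] by simp
    have "((\<lambda>a. H (a + of_real (2*pi))) has_field_derivative h (a + of_real (2*pi))) (at a)"
      using H'[OF a2] DERIV_shift[of H "h (a + of_real (2*pi))" a "of_real (2*pi)"] by simp
    then have "(D has_field_derivative h (a + of_real (2*pi)) - h a) (at a)"
      unfolding D_def by (intro derivative_intros H'[OF a])
    then show "(D has_field_derivative 0) (at a within strip r)"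
      using per[OF a] by (simp add: has_field_derivative_at_within)
  qed
  then obtain C where C: "\<And>a. a \<in> strip r \<Longrightarrow> D a = C" by blast
  have int: "((\<lambda>x. h (of_real x + a)) has_integral D a) {0..2*pi}" if a: "a \<in> strip r" for a
  proof -
    have "path_image (linepath a (a + of_real (2*pi))) \<subseteq> strip r"
      using a strip_add_real[of a "2*pi" r] convex_strip by (simp add: closed_segment_subset)
    then have "(h has_contour_integral D a) (linepath a (a + of_real (2*pi)))"
      unfolding D_def using contour_integral_primitive[OF H] by fastforce
    then have 1: "((\<lambda>x. h (linepath a (a + of_real (2*pi)) x) * of_real (2*pi)) has_integral D a) {0..1}"
      by (simp add: has_contour_integral_linepath)
    have "((\<lambda>z. h (z + a)) has_contour_integral D a) (linepath 0 (of_real (2*pi)))"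
      unfolding has_contour_integral_linepath
      using 1 by (simp add: linepath_def algebra_simps)
    then show ?thesis
      using has_contour_integral_linepath_Reals_iff[of 0 "of_real (2*pi)" "\<lambda>z. h (z + a)" "D a"]
      by simp
  qed
  have "0 \<in> strip r" "\<i> * of_real c \<in> strip r" using c by (auto simp: strip_def)
  from int[OF this(1)] int[OF this(2)] C[OF this(1)] C[OF this(2)]
  show ?thesis by (simp add: integral_unique)
qed

lemma hol2_cont:
  assumes "holomorphic2_on F S" "open S"
  shows "continuous_on S F"
proof -
  have "continuous (at z within S) F" if "z \<in> S" for z
    using assms that unfolding holomorphic2_on_def by (meson has_derivative_continuous)
  then show ?thesis by (simp add: continuous_on_eq_continuous_within)
qed

lemma hol2_fst:
  assumes "holomorphic2_on F (S \<times> S)" "open S" "w \<in> S"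
  shows "(\<lambda>z. F (z, w)) holomorphic_on S"
  unfolding holomorphic_on_def
proof
  fix z assume z: "z \<in> S"
  then obtain a b where d: "(F has_derivative (\<lambda>h. a * fst h + b * snd h)) (at (z, w) within S \<times> S)"
    using assms unfolding holomorphic2_on_def by blast
  have "at (z, w) within S \<times> S = at (z, w)" using assms z by (intro at_within_open) (auto intro: open_Times)
  then have d': "(F has_derivative (\<lambda>h. a * fst h + b * snd h)) (at (z, w))" using d by simp
  have p: "((\<lambda>z. (z, w)) has_derivative (\<lambda>h. (h, 0))) (at z)"
    by (intro derivative_eq_intros) auto
  have "((\<lambda>z. F (z, w)) has_derivative (\<lambda>h. a * h)) (at z)"
    using has_derivative_compose[OF p d'] by simp
  then have "((\<lambda>z. F (z, w)) has_field_derivative a) (at z)"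
    by (simp add: has_field_derivative_def)
  then show "(\<lambda>z. F (z, w)) field_differentiable at z within S"
    using field_differentiable_at_within field_differentiable_def by blast
qed

lemma hol2_snd:
  assumes "holomorphic2_on F (S \<times> S)" "open S" "z \<in> S"
  shows "(\<lambda>w. F (z, w)) holomorphic_on S"
  unfolding holomorphic_on_def
proof
  fix w assume w: "w \<in> S"
  then obtain a b where d: "(F has_derivative (\<lambda>h. a * fst h + b * snd h)) (at (z, w) within S \<times> S)"
    using assms unfolding holomorphic2_on_def by blast
  have "at (z, w) within S \<times> S = at (z, w)" using assms w by (intro at_within_open) (auto intro: open_Times)
  then have d': "(F has_derivative (\<lambda>h. a * fst h + b * snd h)) (at (z, w))" using d by simp
  have p: "((\<lambda>w. (z, w)) has_derivative (\<lambda>h. (0, h))) (at w)"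
    by (intro derivative_eq_intros) auto
  have "((\<lambda>w. F (z, w)) has_derivative (\<lambda>h. b * h)) (at w)"
    using has_derivative_compose[OF p d'] by simp
  then have "((\<lambda>w. F (z, w)) has_field_derivative b) (at w)"
    by (simp add: has_field_derivative_def)
  then show "(\<lambda>w. F (z, w)) field_differentiable at w within S"
    using field_differentiable_at_within field_differentiable_def by blast
qed

lemma identity_strip2:
  fixes F :: "complex \<times> complex \<Rightarrow> complex"
  assumes r: "r > 0"
    and h1: "\<And>w. w \<in> strip r \<Longrightarrow> (\<lambda>z. F (z, w)) holomorphic_on strip r"
    and h2: "\<And>z. z \<in> strip r \<Longrightarrow> (\<lambda>w. F (z, w)) holomorphic_on strip r"
    and z0: "\<And>x y. F (of_real x, of_real y) = 0"
    and z: "z \<in> strip r" and w: "w \<in> strip r"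
  shows "F (z, w) = 0"
proof -
  have a: "F (z', of_real y) = 0" if "z' \<in> strip r" for z' y
    using identity_strip[OF r h1[OF real_in_strip[OF r]] z0 that] .
  show ?thesis
    using identity_strip[OF r h2[OF z] a[OF z] w] .
qed

lemma norm_integral_le:
  fixes f :: "real \<Rightarrow> 'a::euclidean_space"
  assumes "a \<le> b" "\<And>x. x \<in> {a..b} \<Longrightarrow> norm (f x) \<le> B"
  shows "norm (integral {a..b} f) \<le> B * (b - a)"
proof -
  have B: "0 \<le> B" using assms(2)[of a] assms(1) norm_ge_zero[of "f a"] by (meson atLeastAtMost_iff order.trans order_refl)
  show ?thesis
  proof (cases "f integrable_on {a..b}")
    case True
    then have "(f has_integral integral {a..b} f) (cbox a b)" by auto
    from has_integral_bound[OF B this] assms show ?thesis by auto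
  next
    case False
    then show ?thesis using B assms(1) by (simp add: not_integrable_integral)
  qed
qed

lemma exp_int_2pi: "exp (2 * of_int n * of_real pi * \<i>) = (1::complex)"
  using exp_integer_2pi[of "of_int n"] by simp

lemma main_bound:
  fixes P :: "complex \<times> complex \<Rightarrow> complex" and k0 k1 :: int
  assumes r: "r > 0" and hol: "holomorphic2_on P (strip r \<times> strip r)"
    and per: "\<And>x y::real. P (of_real (x + 2*pi), of_real y) = P (of_real x, of_real y) \<and>
                          P (of_real x, of_real (y + 2*pi)) = P (of_real x, of_real y)"
    and dpos: "0 < \<delta>" and dlt: "\<delta> < r"
    and B: "\<And>z. \<bar>Im (fst z)\<bar> = \<delta> \<Longrightarrow> \<bar>Im (snd z)\<bar> = \<delta> \<Longrightarrow> cmod (P z) \<le> B"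
  shows "cmod (integral (cbox (0,0) (2*pi,2*pi))
           (\<lambda>\<theta>. P (of_real (fst \<theta>), of_real (snd \<theta>)) *
                 exp (- \<i> * (of_int k0 * of_real (fst \<theta>) + of_int k1 * of_real (snd \<theta>)))))
         \<le> (B * exp (- \<delta> * (\<bar>k0\<bar> + \<bar>k1\<bar>)) * (2*pi)) * (2*pi)"
proof -
  define S where "S = strip r"
  have oS: "open S" unfolding S_def by (rule open_strip)
  have hol': "holomorphic2_on P (S \<times> S)" using hol S_def by simp
  have h1: "(\<lambda>z. P (z, w)) holomorphic_on S" if "w \<in> S" for w
    using hol2_fst[OF hol' oS that] .
  have h2: "(\<lambda>w. P (z, w)) holomorphic_on S" if "z \<in> S" for z
    using hol2_snd[OF hol' oS that] .
  have Sadd: "z + of_real c \<in> S \<longleftrightarrow> z \<in> S" for z c unfolding S_def by simp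
  have Sadd2: "z + 2 * of_real pi \<in> S \<longleftrightarrow> z \<in> S" for z using Sadd[of z "2*pi"] by simp
  have h1s: "(\<lambda>z. P (z + of_real c, w)) holomorphic_on S" if "w \<in> S" for w c
  proof -
    have "((\<lambda>z. P (z, w)) \<circ> (\<lambda>z. z + of_real c)) holomorphic_on S"
      by (rule holomorphic_on_compose_gen[OF _ h1[OF that]]) (auto intro!: holomorphic_intros simp: Sadd)
    then show ?thesis by (simp add: o_def)
  qed
  have h2s: "(\<lambda>w. P (z, w + of_real c)) holomorphic_on S" if "z \<in> S" for z c
  proof -
    have "((\<lambda>w. P (z, w)) \<circ> (\<lambda>w. w + of_real c)) holomorphic_on S"
      by (rule holomorphic_on_compose_gen[OF _ h2[OF that]]) (auto intro!: holomorphic_intros simp: Sadd)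
    then show ?thesis by (simp add: o_def)
  qed
  have perz: "P (z + of_real (2*pi), w) = P (z, w)" if "z \<in> S" "w \<in> S" for z w
  proof -
    have "(\<lambda>(z,w). P (z + of_real (2*pi), w) - P (z, w)) (z, w) = 0"
    proof (rule identity_strip2[OF r])
      show "(\<lambda>z. (\<lambda>(z,w). P (z + of_real (2*pi), w) - P (z, w)) (z, w)) holomorphic_on strip r"
        if "w \<in> strip r" for w
        using that h1s[of w "2*pi", simplified] by (auto simp: S_def[symmetric] intro!: holomorphic_intros h1)
      show "(\<lambda>w. (\<lambda>(z,w). P (z + of_real (2*pi), w) - P (z, w)) (z, w)) holomorphic_on strip r"
        if "z \<in> strip r" for z
        using that by (auto simp: S_def[symmetric] Sadd2 intro!: holomorphic_intros h2)
      show "(\<lambda>(z,w). P (z + of_real (2*pi), w) - P (z, w)) (of_real x, of_real y) = 0" for x y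
        using per[of x y] by simp
    qed (use that S_def in auto)
    then show ?thesis by simp
  qed
  have perw: "P (z, w + of_real (2*pi)) = P (z, w)" if "z \<in> S" "w \<in> S" for z w
  proof -
    have "(\<lambda>(z,w). P (z, w + of_real (2*pi)) - P (z, w)) (z, w) = 0"
    proof (rule identity_strip2[OF r])
      show "(\<lambda>z. (\<lambda>(z,w). P (z, w + of_real (2*pi)) - P (z, w)) (z, w)) holomorphic_on strip r"
        if "w \<in> strip r" for w
        using that by (auto simp: S_def[symmetric] Sadd2 intro!: holomorphic_intros h1)
      show "(\<lambda>w. (\<lambda>(z,w). P (z, w + of_real (2*pi)) - P (z, w)) (z, w)) holomorphic_on strip r"
        if "z \<in> strip r" for z
        using that h2s[of z "2*pi", simplified] by (auto simp: S_def[symmetric] intro!: holomorphic_intros h2)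
      show "(\<lambda>(z,w). P (z, w + of_real (2*pi)) - P (z, w)) (of_real x, of_real y) = 0" for x y
        using per[of x y] by simp
    qed (use that S_def in auto)
    then show ?thesis by simp
  qed
  define E where "E = (\<lambda>(z::complex, w::complex). exp (- \<i> * (of_int k0 * z + of_int k1 * w)))"
  define G where "G = (\<lambda>p. P p * E p)"
  have Ez: "E (z + of_real (2*pi), w) = E (z, w)" for z w
  proof -
    have "E (z + of_real (2*pi), w) = E (z, w) * exp (2 * of_int (- k0) * of_real pi * \<i>)"
      unfolding E_def by (simp add: exp_add[symmetric] algebra_simps)
    then show ?thesis by (simp only: exp_int_2pi) simp
  qed
  have Ew: "E (z, w + of_real (2*pi)) = E (z, w)" for z w
  proof -
    have "E (z, w + of_real (2*pi)) = E (z, w) * exp (2 * of_int (- k1) * of_real pi * \<i>)"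
      unfolding E_def by (simp add: exp_add[symmetric] algebra_simps)
    then show ?thesis by (simp only: exp_int_2pi) simp
  qed
  have Gz: "G (z + of_real (2*pi), w) = G (z, w)" if "z \<in> S" "w \<in> S" for z w
    using perz[OF that] Ez unfolding G_def by simp
  have Gw: "G (z, w + of_real (2*pi)) = G (z, w)" if "z \<in> S" "w \<in> S" for z w
    using perw[OF that] Ew unfolding G_def by simp
  have G1: "(\<lambda>z. G (z, w)) holomorphic_on S" if "w \<in> S" for w
    unfolding G_def E_def using h1[OF that] by (auto intro!: holomorphic_intros)
  have G2: "(\<lambda>w. G (z, w)) holomorphic_on S" if "z \<in> S" for z
    unfolding G_def E_def using h2[OF that] by (auto intro!: holomorphic_intros)
  have contP: "continuous_on (S \<times> S) P" using hol2_cont[OF hol'] oS by (simp add: open_Times)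
  have contG: "continuous_on (S \<times> S) G"
    unfolding G_def E_def by (auto intro!: continuous_intros contP simp: split_def)
  have contGc: "continuous_on A (\<lambda>x. G (\<phi> x))" if "continuous_on A \<phi>" "\<phi> ` A \<subseteq> S \<times> S" for A and \<phi> :: "real \<times> real \<Rightarrow> _"
    using continuous_on_compose2[OF contG that(1) that(2)] .
  have inS: "of_real x + \<i> * of_real c \<in> S" if "\<bar>c\<bar> < r" for x c
    using that unfolding S_def strip_def by simp
  define s0 :: real where "s0 = (if k0 \<ge> 0 then -1 else 1)"
  define s1 :: real where "s1 = (if k1 \<ge> 0 then -1 else 1)"
  define c0 where "c0 = s0 * \<delta>"
  define c1 where "c1 = s1 * \<delta>"
  have c0: "\<bar>c0\<bar> = \<delta>" "of_int k0 * c0 = - \<delta> * \<bar>k0\<bar>" using dpos by (auto simp: c0_def s0_def)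
  have c1: "\<bar>c1\<bar> = \<delta>" "of_int k1 * c1 = - \<delta> * \<bar>k1\<bar>" using dpos by (auto simp: c1_def s1_def)
  have c0S: "of_real x + \<i> * of_real c0 \<in> S" for x using inS c0 dlt by simp
  have c1S: "of_real x + \<i> * of_real c1 \<in> S" for x using inS c1 dlt by simp
  have rS: "of_real x \<in> S" for x using inS[of 0 x] r by simp
  let ?J = "integral (cbox (0,0) (2*pi,2*pi)) (\<lambda>\<theta>. G (of_real (fst \<theta>), of_real (snd \<theta>)))"
  have cont1: "continuous_on UNIV (\<lambda>\<theta>::real\<times>real. G (of_real (fst \<theta>), of_real (snd \<theta>)))"
    by (rule contGc) (auto intro!: continuous_intros simp: rS)
  have cont2: "continuous_on UNIV (\<lambda>\<theta>::real\<times>real. G (of_real (fst \<theta>), of_real (snd \<theta>) + \<i> * of_real c1))"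
    by (rule contGc) (auto intro!: continuous_intros simp: rS c1S)
  have "?J = integral {0..2*pi} (\<lambda>x. integral {0..2*pi} (\<lambda>y. G (of_real x, of_real y)))"
    using integral_prod_continuous[OF continuous_on_subset[OF cont1 subset_UNIV], of 0 0 "2*pi" "2*pi"]
    by (simp add: cbox_interval)
  also have "\<dots> = integral {0..2*pi} (\<lambda>x. integral {0..2*pi} (\<lambda>y. G (of_real x, of_real y + \<i> * of_real c1)))"
  proof (rule integral_cong)
    fix x :: real
    show "integral {0..2*pi} (\<lambda>y. G (of_real x, of_real y)) = integral {0..2*pi} (\<lambda>y. G (of_real x, of_real y + \<i> * of_real c1))"
      by (rule shift1[of "\<lambda>w. G (of_real x, w)" r c1]) (use G2[OF rS] Gw[OF rS] c1 dlt in \<open>auto simp: S_def\<close>)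
  qed
  also have "\<dots> = integral {0..2*pi} (\<lambda>y. integral {0..2*pi} (\<lambda>x. G (of_real x, of_real y + \<i> * of_real c1)))"
    using integral_swap_continuous[of 0 0 "2*pi" "2*pi" "\<lambda>x y. G (of_real x, of_real y + \<i> * of_real c1)"]
      continuous_on_subset[OF cont2 subset_UNIV]
    by (simp add: cbox_interval split_def)
  also have "\<dots> = integral {0..2*pi} (\<lambda>y. integral {0..2*pi} (\<lambda>x. G (of_real x + \<i> * of_real c0, of_real y + \<i> * of_real c1)))"
  proof (rule integral_cong)
    fix y :: real
    show "integral {0..2*pi} (\<lambda>x. G (of_real x, of_real y + \<i> * of_real c1)) = integral {0..2*pi} (\<lambda>x. G (of_real x + \<i> * of_real c0, of_real y + \<i> * of_real c1))"
      by (rule shift1[of "\<lambda>z. G (z, of_real y + \<i> * of_real c1)" r c0]) (use G1[OF c1S] Gz[OF _ c1S] c0 dlt in \<open>auto simp: S_def\<close>)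
  qed
  finally have J: "?J = \<dots>" .
  define K where "K = B * exp (- \<delta> * (\<bar>k0\<bar> + \<bar>k1\<bar>))"
  have bnd: "cmod (G (of_real x + \<i> * of_real c0, of_real y + \<i> * of_real c1)) \<le> K" for x y
  proof -
    have "cmod (P (of_real x + \<i> * of_real c0, of_real y + \<i> * of_real c1)) \<le> B"
      using B c0 c1 by simp
    moreover have "cmod (E (of_real x + \<i> * of_real c0, of_real y + \<i> * of_real c1)) = exp (- \<delta> * (\<bar>k0\<bar> + \<bar>k1\<bar>))"
    proof -
      have "Re (- \<i> * (of_int k0 * (of_real x + \<i> * of_real c0) + of_int k1 * (of_real y + \<i> * of_real c1)))
            = of_int k0 * c0 + of_int k1 * c1" by simp
      then show ?thesis unfolding E_def using c0 c1 by (simp add: norm_exp_eq_Re algebra_simps)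
    qed
    ultimately show ?thesis unfolding G_def K_def by (simp add: norm_mult mult_right_mono)
  qed
  have inner: "norm (integral {0..2*pi} (\<lambda>x. G (of_real x + \<i> * of_real c0, of_real y + \<i> * of_real c1))) \<le> K * (2*pi - 0)" for y
    by (rule norm_integral_le) (auto intro: bnd)
  have "cmod ?J \<le> (K * (2*pi - 0)) * (2*pi - 0)"
    unfolding J by (rule norm_integral_le) (use inner in auto)
  then have L: "cmod ?J \<le> K * (2*pi) * (2*pi)" by simp
  have eqJ: "?J = integral (cbox (0,0) (2*pi,2*pi))
           (\<lambda>\<theta>. P (of_real (fst \<theta>), of_real (snd \<theta>)) *
                 exp (- \<i> * (of_int k0 * of_real (fst \<theta>) + of_int k1 * of_real (snd \<theta>))))"
    unfolding G_def E_def by (simp only: prod.case)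
  show ?thesis using L unfolding eqJ K_def .
qed

lemma ebasis_eq: "ebasis k (x, y) = complex_of_real (1 / (2*pi)) *
   exp (\<i> * (of_int (fst k) * of_real x + of_int (snd k) * of_real y))"
  by (simp add: ebasis_def)

lemma norm_ebasis: "cmod (ebasis k \<theta>) = 1 / (2*pi)"
proof -
  have a: "\<i> * (of_int (fst k) * of_real (fst \<theta>) + of_int (snd k) * of_real (snd \<theta>)) =
        \<i> * complex_of_real (of_int (fst k) * fst \<theta> + of_int (snd k) * snd \<theta>)" by simp
  have "cmod (exp (\<i> * (of_int (fst k) * of_real (fst \<theta>) + of_int (snd k) * of_real (snd \<theta>)))) = 1"
    unfolding a by (rule norm_exp_i_times)
  moreover have "ebasis k \<theta> = complex_of_real (1 / (2*pi)) *
     exp (\<i> * (of_int (fst k) * of_real (fst \<theta>) + of_int (snd k) * of_real (snd \<theta>)))"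
    using ebasis_eq[of k "fst \<theta>" "snd \<theta>"] by simp
  ultimately show ?thesis by (simp only: norm_mult norm_of_real) simp
qed

lemma S_meas: "I2pi \<times> I2pi \<in> sets lborel"
proof -
  have eq: "I2pi \<times> I2pi = ({0..2*pi} \<times> {0..2*pi}) \<inter> ({x::real\<times>real. fst x < 2*pi} \<inter> {x. snd x < 2*pi})"
    by (auto simp: I2pi_def)
  have o1: "open {x::real\<times>real. fst x < 2*pi}" by (intro open_Collect_less continuous_intros)
  have o2: "open {x::real\<times>real. snd x < 2*pi}" by (intro open_Collect_less continuous_intros)
  have c: "closed ({0..2*pi} \<times> {0..2*pi::real})" by (intro closed_Times closed_atLeastAtMost)
  show ?thesis unfolding eq sets_lborel
    by (intro sets.Int borel_closed[OF c] borel_open[OF o1] borel_open[OF o2])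
qed

lemma S_sub: "I2pi \<times> I2pi \<subseteq> cbox (0,0) (2*pi, 2*pi)"
  by (auto simp: I2pi_def cbox_def Basis_prod_def inner_prod_def)

lemma S_negl: "negligible (cbox (0,0) (2*pi, 2*pi) - I2pi \<times> I2pi)"
proof -
  have "cbox (0,0) (2*pi, 2*pi) - I2pi \<times> I2pi \<subseteq> {x. x \<bullet> (1::real,0::real) = 2*pi} \<union> {x. x \<bullet> (0::real,1::real) = 2*pi}"
    by (auto simp: I2pi_def cbox_def Basis_prod_def inner_prod_def)
  moreover have "negligible ({x. x \<bullet> (1::real,0::real) = 2*pi} \<union> {x. x \<bullet> (0::real,1::real) = 2*pi})"
    by (intro negligible_Un negligible_standard_hyperplane) (auto simp: Basis_prod_def)
  ultimately show ?thesis by (rule negligible_subset[rotated])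
qed

lemma set_int_to_HK:
  fixes g :: "real \<times> real \<Rightarrow> complex"
  assumes "continuous_on UNIV g"
  shows "(LINT \<theta>:(I2pi \<times> I2pi)|lborel. g \<theta>) = integral (cbox (0,0) (2*pi, 2*pi)) g"
proof -
  have "set_integrable lborel (cbox (0,0) (2*pi, 2*pi)) g"
    unfolding set_integrable_def
    by (rule borel_integrable_compact) (auto intro: continuous_on_subset[OF assms])
  then have "set_integrable lborel (I2pi \<times> I2pi) g"
    by (rule set_integrable_subset[OF _ S_meas S_sub])
  then have "(LINT \<theta>:(I2pi \<times> I2pi)|lborel. g \<theta>) = integral (I2pi \<times> I2pi) g"
    by (rule set_borel_integral_eq_integral)
  also have "\<dots> = integral (cbox (0,0) (2*pi, 2*pi)) g"
    by (rule integral_subset_negligible[OF S_sub S_negl])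
  finally show ?thesis .
qed

lemma pointwise:
  fixes Phi :: "real \<times> real \<Rightarrow> real \<times> real \<Rightarrow> real"
    and Phie :: "complex \<times> complex \<Rightarrow> real \<times> real \<Rightarrow> complex"
  assumes r_pos: "r > 0"
    and ext: "unif_analytic_ext Phi Phie r"
    and period: "\<forall>\<tau> \<in> I2pi \<times> I2pi. zeta \<tau> \<noteq> 0 \<longrightarrow>
        (\<forall>x0 x1. Phi (x0 + 2*pi, x1) \<tau> = Phi (x0, x1) \<tau> \<and> Phi (x0, x1 + 2*pi) \<tau> = Phi (x0, x1) \<tau>)"
    and dpos: "0 < \<delta>" and dlt: "\<delta> < r"
    and eta: "\<eta> \<in> I2pi \<times> I2pi" "zeta \<eta> \<noteq> 0"
  shows "ennreal (2*pi * exp (\<delta> * of_int (norm1 k)) *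
           cmod (LINT \<theta>:(I2pi \<times> I2pi)|lborel. complex_of_real (Phi \<theta> \<eta>) * ebasis (- k) \<theta> * ebasis (- l) \<eta>))
         \<le> S_delta \<delta> Phie \<eta>"
proof -
  define P where "P = (\<lambda>z. Phie z \<eta>)"
  have hol: "holomorphic2_on P (strip r \<times> strip r)" and Pr: "\<And>x0 x1. P (of_real x0, of_real x1) = of_real (Phi (x0, x1) \<eta>)"
    using ext eta unfolding unif_analytic_ext_def P_def by auto
  have per: "P (of_real (x + 2*pi), of_real y) = P (of_real x, of_real y) \<and>
             P (of_real x, of_real (y + 2*pi)) = P (of_real x, of_real y)" for x y
    using period eta unfolding Pr by auto
  obtain k0 k1 where k: "k = (k0, k1)" by (cases k)
  define E where "E = (\<lambda>\<theta>::real\<times>real. exp (- \<i> * (of_int k0 * of_real (fst \<theta>) + of_int k1 * of_real (snd \<theta>))))"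
  define g where "g = (\<lambda>\<theta>::real\<times>real. P (of_real (fst \<theta>), of_real (snd \<theta>)) * E \<theta>)"
  define c where "c = ebasis (- l) \<eta> * complex_of_real (1 / (2*pi))"
  have contP: "continuous_on (strip r \<times> strip r) P" using hol2_cont[OF hol] open_strip by (simp add: open_Times)
  have contg: "continuous_on UNIV g"
    unfolding g_def E_def
    by (intro continuous_intros continuous_on_compose2[OF contP])
       (auto intro!: continuous_intros simp: real_in_strip[OF r_pos])
  have integrand: "complex_of_real (Phi \<theta> \<eta>) * ebasis (- k) \<theta> * ebasis (- l) \<eta> = c * g \<theta>" for \<theta>
  proof -
    obtain x y where t: "\<theta> = (x, y)" by (cases \<theta>)
    show ?thesis unfolding t g_def E_def c_def ebasis_eq k Pr[symmetric]
      by (simp add: algebra_simps)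
  qed
  define J where "J = integral (cbox (0,0) (2*pi, 2*pi)) g"
  have L: "(LINT \<theta>:(I2pi \<times> I2pi)|lborel. complex_of_real (Phi \<theta> \<eta>) * ebasis (- k) \<theta> * ebasis (- l) \<eta>) = c * J"
    unfolding integrand set_integral_mult_right J_def using set_int_to_HK[OF contg] by simp
  have nc: "cmod c = 1 / (2*pi) * (1 / (2*pi))" unfolding c_def norm_mult norm_ebasis norm_of_real by simp
  let ?Z = "{z :: complex \<times> complex. \<bar>Im (fst z)\<bar> = \<delta> \<and> \<bar>Im (snd z)\<bar> = \<delta>}"
  define SU where "SU = (SUP z \<in> ?Z. ennreal (cmod (Phie z \<eta>)))"
  have SD: "S_delta \<delta> Phie \<eta> = ennreal (2*pi) * SU" unfolding S_delta_def SU_def ..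
  show ?thesis
  proof (cases "SU = top")
    case True
    then show ?thesis unfolding SD by (simp add: ennreal_mult_top)
  next
    case False
    define B where "B = enn2real SU"
    have B0: "0 \<le> B" unfolding B_def by simp
    have SUB: "SU = ennreal B" unfolding B_def using False by (cases SU) auto
    have Bb: "cmod (P z) \<le> B" if "\<bar>Im (fst z)\<bar> = \<delta>" "\<bar>Im (snd z)\<bar> = \<delta>" for z
    proof -
      have "ennreal (cmod (P z)) \<le> SU" unfolding SU_def P_def using that by (intro SUP_upper) auto
      then show ?thesis using B0 SUB by simp
    qed
    have J: "cmod J \<le> (B * exp (- \<delta> * (\<bar>k0\<bar> + \<bar>k1\<bar>)) * (2*pi)) * (2*pi)"
      using main_bound[OF r_pos hol per dpos dlt Bb, of k0 k1] unfolding J_def g_def E_def by simp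
    have "2*pi * exp (\<delta> * of_int (norm1 k)) * cmod (c * J) \<le> 2*pi * B"
    proof -
      have e: "exp (\<delta> * of_int (norm1 k)) * exp (- \<delta> * (\<bar>k0\<bar> + \<bar>k1\<bar>)) = 1"
        by (simp add: k norm1_def exp_add[symmetric])
      have "2*pi * exp (\<delta> * of_int (norm1 k)) * cmod (c * J)
            = exp (\<delta> * of_int (norm1 k)) * cmod J / (2*pi)"
        by (simp add: norm_mult nc field_simps)
      also have "\<dots> \<le> exp (\<delta> * of_int (norm1 k)) * ((B * exp (- \<delta> * (\<bar>k0\<bar> + \<bar>k1\<bar>)) * (2*pi)) * (2*pi)) / (2*pi)"
        by (intro divide_right_mono mult_left_mono J) auto
      also have "\<dots> = 2*pi * B * (exp (\<delta> * of_int (norm1 k)) * exp (- \<delta> * (\<bar>k0\<bar> + \<bar>k1\<bar>)))"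
        by (simp add: field_simps)
      also have "\<dots> = 2*pi * B" unfolding e by simp
      finally show ?thesis .
    qed
    then have "ennreal (2*pi * exp (\<delta> * of_int (norm1 k)) * cmod (c * J)) \<le> ennreal (2*pi * B)"
      by (intro ennreal_leI)
    also have "\<dots> = S_delta \<delta> Phie \<eta>" unfolding SD SUB using B0 by (simp add: ennreal_mult)
    finally show ?thesis unfolding L .
  qed
qed

lemma zeta_zero:
  assumes "\<eta> \<in> I2pi \<times> I2pi" "zeta \<eta> = 0"
  shows "\<eta> = (0, 0)"
proof -
  define a where "a = min (fst \<eta>) (2*pi - fst \<eta>)"
  define b where "b = min (snd \<eta>) (2*pi - snd \<eta>)"
  have "sqrt (a^2 + b^2) = 0" using assms(2) unfolding zeta_def a_def b_def .
  then have "a^2 + b^2 = 0" by simp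
  then have ab: "a = 0" "b = 0" by (simp_all add: sum_power2_eq_zero_iff)
  have "0 \<le> fst \<eta>" "fst \<eta> < 2*pi" "0 \<le> snd \<eta>" "snd \<eta> < 2*pi"
    using assms(1) by (auto simp: I2pi_def)
  with ab have "fst \<eta> = 0" "snd \<eta> = 0" unfolding a_def b_def by (auto simp: min_def split: if_splits)
  then show ?thesis by (cases \<eta>) simp
qed

theorem theorem2:
  fixes Phi :: "real \<times> real \<Rightarrow> real \<times> real \<Rightarrow> real"
    and Phie :: "complex \<times> complex \<Rightarrow> real \<times> real \<Rightarrow> complex"
    and r M :: real
  assumes r_pos: "r > 0"
    and ext: "unif_analytic_ext Phi Phie r"
    and period: "\<forall>\<tau> \<in> I2pi \<times> I2pi. zeta \<tau> \<noteq> 0 \<longrightarrow>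
        (\<forall>x0 x1. Phi (x0 + 2*pi, x1) \<tau> = Phi (x0, x1) \<tau> \<and> Phi (x0, x1 + 2*pi) \<tau> = Phi (x0, x1) \<tau>)"
    and M_pos: "M > 0"
    and bound: "\<forall>\<delta>. 0 < \<delta> \<and> \<delta> < r \<longrightarrow>
        (\<integral>\<^sup>+ \<tau> \<in> {\<tau> \<in> I2pi \<times> I2pi. zeta \<tau> \<noteq> 0}. S_delta \<delta> Phie \<tau> \<partial>lborel) \<le> ennreal M"
  shows "\<forall>\<delta>. 0 < \<delta> \<and> \<delta> < r \<longrightarrow> (\<forall>k l. cmod (fourier2 Phi k l) \<le> M / (2*pi) * exp (- \<delta> * of_int (norm1 k)))"
proof (intro allI impI)
  fix \<delta> :: real and k l :: "int \<times> int"
  assume dl: "0 < \<delta> \<and> \<delta> < r"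
  define S where "S = I2pi \<times> I2pi"
  define inner where "inner \<eta> = (LINT \<theta>:S|lborel. complex_of_real (Phi \<theta> \<eta>) * ebasis (- k) \<theta> * ebasis (- l) \<eta>)" for \<eta>
  define Kc where "Kc = 2*pi * exp (\<delta> * of_int (norm1 k))"
  have Kc: "Kc > 0" unfolding Kc_def by simp
  have F: "fourier2 Phi k l = (LINT \<eta>|lborel. indicator S \<eta> *\<^sub>R inner \<eta>)"
    unfolding fourier2_def inner_def S_def by (simp add: set_lebesgue_integral_def[of lborel "I2pi \<times> I2pi"])
  have RHS: "M / (2*pi) * exp (- \<delta> * of_int (norm1 k)) = M / Kc"
    unfolding Kc_def by (simp add: exp_minus field_simps)
  show "cmod (fourier2 Phi k l) \<le> M / (2*pi) * exp (- \<delta> * of_int (norm1 k))"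
  proof (cases "integrable lborel (\<lambda>\<eta>. indicator S \<eta> *\<^sub>R inner \<eta>)")
    case False
    then have "fourier2 Phi k l = 0" unfolding F by (rule not_integrable_integral_eq)
    then show ?thesis using M_pos by simp
  next
    case True
    have meas: "(\<lambda>\<eta>. ennreal (norm (indicator S \<eta> *\<^sub>R inner \<eta>))) \<in> borel_measurable lborel"
      using borel_measurable_integrable[OF True] by measurable
    have 1: "ennreal (cmod (fourier2 Phi k l)) \<le> (\<integral>\<^sup>+ \<eta>. ennreal (norm (indicator S \<eta> *\<^sub>R inner \<eta>)) \<partial>lborel)"
      unfolding F by (rule integral_norm_bound_ennreal[OF True])
    have AE: "AE \<eta> in lborel. ennreal (norm (indicator S \<eta> *\<^sub>R inner \<eta>)) * ennreal Kc
                 \<le> S_delta \<delta> Phie \<eta> * indicator {\<tau> \<in> I2pi \<times> I2pi. zeta \<tau> \<noteq> 0} \<eta>"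
      using AE_lborel_singleton[of "(0::real, 0::real)"]
    proof (rule eventually_mono)
      fix \<eta> :: "real \<times> real" assume ne: "\<eta> \<noteq> (0, 0)"
      show "ennreal (norm (indicator S \<eta> *\<^sub>R inner \<eta>)) * ennreal Kc
                 \<le> S_delta \<delta> Phie \<eta> * indicator {\<tau> \<in> I2pi \<times> I2pi. zeta \<tau> \<noteq> 0} \<eta>"
      proof (cases "\<eta> \<in> S")
        case False
        then show ?thesis by simp
      next
        case True
        then have z: "zeta \<eta> \<noteq> 0" using zeta_zero ne unfolding S_def by blast
        have "ennreal (norm (indicator S \<eta> *\<^sub>R inner \<eta>)) * ennreal Kc = ennreal (Kc * cmod (inner \<eta>))"
          using True Kc by (simp add: ennreal_mult'' mult.commute)
        also have "\<dots> \<le> S_delta \<delta> Phie \<eta>"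
          unfolding Kc_def inner_def S_def
          by (rule pointwise[OF r_pos ext period _ _ _ z]) (use dl True S_def in auto)
        finally show ?thesis using True z unfolding S_def by simp
      qed
    qed
    have "ennreal (cmod (fourier2 Phi k l)) * ennreal Kc
          \<le> (\<integral>\<^sup>+ \<eta>. ennreal (norm (indicator S \<eta> *\<^sub>R inner \<eta>)) \<partial>lborel) * ennreal Kc"
      by (rule mult_right_mono[OF 1]) simp
    also have "\<dots> = (\<integral>\<^sup>+ \<eta>. ennreal (norm (indicator S \<eta> *\<^sub>R inner \<eta>)) * ennreal Kc \<partial>lborel)"
      by (rule nn_integral_multc[OF meas, symmetric])
    also have "\<dots> \<le> (\<integral>\<^sup>+ \<tau> \<in> {\<tau> \<in> I2pi \<times> I2pi. zeta \<tau> \<noteq> 0}. S_delta \<delta> Phie \<tau> \<partial>lborel)"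
      by (rule nn_integral_mono_AE[OF AE])
    also have "\<dots> \<le> ennreal M" using bound dl by blast
    finally have "ennreal (cmod (fourier2 Phi k l) * Kc) \<le> ennreal M"
      using Kc by (simp add: ennreal_mult'')
    then have "cmod (fourier2 Phi k l) * Kc \<le> M" using M_pos by simp
    then show ?thesis unfolding RHS using Kc by (simp add: pos_le_divide_eq)
  qed
qed

end
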